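(* Let $f^*\in L^2(\mathcal D)$ with $\mathbb E_{x\sim\mathcal D}[f^*(x)^2]\le1$. Let $f_{\mathrm{teacher}}$ be any function that is shrinkage-optimal with respect to $f^*$, and let $f_{\mathrm{student}}$ be any function that is shrinkage-optimal with respect to $f_{\mathrm{teacher}}$. Let $\mathcal L_{TE}=\mathbb E_x[(f_{\mathrm{teacher}}(x)-f^*(x))^2]$ and $\mathcal L_{ST}=\mathbb E_x[(f_{\mathrm{student}}(x)-f^*(x))^2]$. Then $$\mathcal L_{ST}\ \ge\ \frac{\big(\sqrt{1+3\mathcal L_{TE}}-\sqrt{1-\mathcal L_{TE}}\big)^2}{4}\ \ge\ \frac34\,\mathcal L_{TE}^2 .$$
   Context: $\mathcal D$ is a probability distribution on an input space $\mathcal X$; $\langle f,g\rangle_{\mathcal D}=\mathbb E_{x\sim\mathcal D}[f(x)g(x)]$. Shrinkage optimality: given $\hat f,f_{\mathrm{train}}:\mathcal X\to\mathbb R$, $\hat f$ is shrinkage-optimal with respect to $f_{\mathrm{train}}$ if for every $0\le\alpha\le1$, $\mathbb E_x[(\hat f(x)-f_{\mathrm{train}}(x))^2]\le\mathbb E_x[(\alpha\hat f(x)-f_{\mathrm{train}}(x))^2]$. All functions are in $L^2(\mathcal D)$. *)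

theory Defs
  imports "HOL-Probability.Probability"
begin

definition L2 :: "'a measure \<Rightarrow> ('a \<Rightarrow> real) \<Rightarrow> bool" where
  "L2 M f \<longleftrightarrow> f \<in> borel_measurable M \<and> integrable M (\<lambda>x. (f x)\<^sup>2)"

definition shrinkage_optimal ::
  "'a measure \<Rightarrow> ('a \<Rightarrow> real) \<Rightarrow> ('a \<Rightarrow> real) \<Rightarrow> bool" where
  "shrinkage_optimal M fhat ftrain \<longleftrightarrow>
     (\<forall>\<alpha>::real. 0 \<le> \<alpha> \<and> \<alpha> \<le> 1 \<longrightarrow>
        (\<integral>x. (fhat x - ftrain x)\<^sup>2 \<partial>M) \<le> (\<integral>x. (\<alpha> * fhat x - ftrain x)\<^sup>2 \<partial>M))"

end

theory Submission
  imports Defs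
begin

lemma cs_real:
  fixes A B C :: real
  assumes Q: "\<And>l m. 0 \<le> l^2*A - 2*l*m*B + m^2*C"
  shows "B^2 \<le> A*C"
proof -
  have A0: "A \<ge> 0" using Q[of 1 0] by simp
  show ?thesis
  proof (cases "A = 0")
    case True
    show ?thesis
    proof (rule ccontr)
      assume "\<not> ?thesis"
      hence "B \<noteq> 0" using True by simp
      hence pos: "B^2 > 0" by simp
      have "0 \<le> ((C+1)/(2*B^2)*B)^2*A - 2*((C+1)/(2*B^2)*B)*1*B + 1^2*C" by (rule Q)
      also have "\<dots> = -(C+1) + C" using True pos \<open>B \<noteq> 0\<close> by (simp add: power2_eq_square field_simps)
      finally show False by simp
    qed
  next
    case False
    hence Ap: "A > 0" using A0 by simp
    have "0 \<le> B^2*A - 2*B*A*B + A^2*C" using Q[of B A] by simp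
    hence "0 \<le> A*(A*C - B^2)" by (simp add: power2_eq_square algebra_simps)
    thus ?thesis using Ap by (simp add: zero_le_mult_iff)
  qed
qed

lemma shrink_real:
  fixes T a :: real
  assumes H: "\<And>\<alpha>. 0 \<le> \<alpha> \<Longrightarrow> \<alpha> \<le> 1 \<Longrightarrow> T - 2*a \<le> \<alpha>^2*T - 2*\<alpha>*a"
    and T0: "T \<ge> 0"
  shows "a \<ge> T"
proof (rule ccontr)
  assume "\<not> a \<ge> T"
  hence lt: "a < T" by simp
  have "T - 2*a \<le> 0" using H[of 0] by simp
  hence a0: "a \<ge> 0" using T0 by simp
  have Tp: "T > 0" using lt a0 by simp
  have "T - 2*a \<le> (a/T)^2*T - 2*(a/T)*a" using H[of "a/T"] a0 Tp lt by simp
  also have "\<dots> = -(a^2)/T" using Tp by (simp add: power2_eq_square field_simps)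
  finally have "T*T - 2*a*T \<le> -(a^2)" using Tp by (simp add: field_simps)
  hence "(T - a)^2 \<le> 0" by (simp add: power2_eq_square algebra_simps)
  thus False using lt by simp
qed

lemma main_real:
  fixes S T Y a b c :: real
  assumes Y1: "Y \<le> 1"
    and H2: "\<And>\<alpha>. 0 \<le> \<alpha> \<Longrightarrow> \<alpha> \<le> 1 \<Longrightarrow> T - 2*a + Y \<le> \<alpha>^2*T - 2*\<alpha>*a + Y"
    and H3: "\<And>\<alpha>. 0 \<le> \<alpha> \<Longrightarrow> \<alpha> \<le> 1 \<Longrightarrow> S - 2*b + T \<le> \<alpha>^2*S - 2*\<alpha>*b + T"
    and P: "\<And>p q r. 0 \<le> p^2*S + q^2*T + r^2*Y + 2*p*q*b + 2*p*r*c + 2*q*r*a"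
  shows "let LTE = T - 2*a + Y; LST = S - 2*c + Y
         in LST \<ge> (sqrt (1 + 3 * LTE) - sqrt (1 - LTE))\<^sup>2 / 4
            \<and> (sqrt (1 + 3 * LTE) - sqrt (1 - LTE))\<^sup>2 / 4 \<ge> 3 / 4 * LTE\<^sup>2"
proof -
  define L where "L = T - 2*a + Y"
  have T0: "T \<ge> 0" using P[of 0 1 0] by simp
  have S0: "S \<ge> 0" using P[of 1 0 0] by simp
  have Y0: "Y \<ge> 0" using P[of 0 0 1] by simp
  have aT: "a \<ge> T" by (rule shrink_real[OF _ T0]) (use H2 in auto)
  have bS: "b \<ge> S" by (rule shrink_real[OF _ S0]) (use H3 in auto)
  have L0: "L \<ge> 0" using P[of 0 1 "-1"] unfolding L_def by simp
  have LY: "L \<le> Y - T" using aT unfolding L_def by simp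
  define m2 where "m2 = S - b + T/4"
  define d2 where "d2 = Y - a + T/4"
  define uv where "uv = c - b/2 - a/2 + T/4"
  have cs: "uv^2 \<le> m2 * d2"
  proof (rule cs_real)
    fix l m :: real
    have "0 \<le> l^2*S + ((m-l)/2)^2*T + (-m)^2*Y + 2*l*((m-l)/2)*b + 2*l*(-m)*c + 2*((m-l)/2)*(-m)*a"
      by (rule P)
    also have "\<dots> = l^2*m2 - 2*l*m*uv + m^2*d2"
      unfolding m2_def d2_def uv_def by (simp add: power2_eq_square field_simps)
    finally show "0 \<le> l^2*m2 - 2*l*m*uv + m^2*d2" .
  qed
  have m20: "m2 \<ge> 0" using P[of 1 "-1/2" 0] unfolding m2_def by (simp add: power2_eq_square field_simps)
  have d20: "d2 \<ge> 0" using P[of 0 "-1/2" 1] unfolding d2_def by (simp add: power2_eq_square field_simps)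
  define Mm where "Mm = sqrt m2"
  define D where "D = sqrt d2"
  define R where "R = sqrt T / 2"
  have Mm0: "Mm \<ge> 0" unfolding Mm_def using m20 by simp
  have uvle: "uv \<le> Mm * D"
  proof -
    have "uv \<le> \<bar>uv\<bar>" by simp
    also have "\<bar>uv\<bar> = sqrt (uv^2)" by simp
    also have "\<dots> \<le> sqrt (m2*d2)" using cs by (rule real_sqrt_le_mono)
    also have "\<dots> = Mm*D" unfolding Mm_def D_def by (simp add: real_sqrt_mult)
    finally show ?thesis .
  qed
  have LST_eq: "S - 2*c + Y = m2 - 2*uv + d2" unfolding m2_def d2_def uv_def by simp
  have Mm2: "Mm^2 = m2" unfolding Mm_def using m20 by simp
  have D2: "D^2 = d2" unfolding D_def using d20 by simp
  have R2: "R^2 = T/4" unfolding R_def using T0 by (simp add: power_divide)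
  have R0: "R \<ge> 0" unfolding R_def using T0 by simp
  have D0: "D \<ge> 0" unfolding D_def using d20 by simp
  have MR: "Mm \<le> R"
  proof -
    have "m2 \<le> T/4" unfolding m2_def using bS by simp
    hence "Mm^2 \<le> R^2" using Mm2 R2 by simp
    thus ?thesis using R0 Mm0 by (simp add: power2_le_iff_abs_le)
  qed
  have RD: "R \<le> D"
  proof -
    have "T/4 \<le> d2" unfolding d2_def using LY L0 unfolding L_def by simp
    hence "R^2 \<le> D^2" using D2 R2 by simp
    thus ?thesis using R0 D0 by (simp add: power2_le_iff_abs_le)
  qed
  have step1: "S - 2*c + Y \<ge> (D - R)^2"
  proof -
    have "S - 2*c + Y \<ge> Mm^2 - 2*Mm*D + D^2" using LST_eq uvle Mm2 D2 by simp
    hence "S - 2*c + Y \<ge> (D - Mm)^2" by (simp add: power2_eq_square algebra_simps)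
    moreover have "(D - R)^2 \<le> (D - Mm)^2" using MR RD Mm0 by (intro power_mono) auto
    ultimately show ?thesis by simp
  qed
  define A0 where "A0 = sqrt (Y + 3*L)"
  define B0 where "B0 = sqrt (Y - L)"
  have A02: "A0^2 = Y + 3*L" unfolding A0_def using Y0 L0 by simp
  have B02: "B0^2 = Y - L" unfolding B0_def using LY T0 by simp
  have A00: "A0 \<ge> 0" "B0 \<ge> 0" unfolding A0_def B0_def using Y0 L0 LY T0 by auto
  have step2: "D - R \<ge> (A0 - B0)/2"
  proof -
    have RB: "R \<le> B0/2"
    proof -
      have "R^2 \<le> (B0/2)^2" using R2 B02 LY by (simp add: power_divide)
      thus ?thesis using R0 A00 by (simp add: power2_le_iff_abs_le)
    qed
    have "D^2 \<ge> (A0/2)^2" using D2 A02 R2 aT unfolding d2_def L_def by (simp add: power_divide)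
    hence "D \<ge> A0/2" using D0 A00 by (simp add: power2_le_iff_abs_le)
    thus ?thesis using RB by simp
  qed
  define A where "A = sqrt (1 + 3*L)"
  define B where "B = sqrt (1 - L)"
  have L1: "L \<le> 1" using LY T0 Y1 by simp
  have A2: "A^2 = 1 + 3*L" unfolding A_def using L0 by simp
  have B2: "B^2 = 1 - L" unfolding B_def using L1 by simp
  have AB0: "A \<ge> 1" "B \<ge> 0" unfolding A_def B_def using L0 L1 by auto
  have AB: "A - B \<ge> 0" unfolding A_def B_def using L0 by (simp add: real_sqrt_le_iff)
  have prodAB: "(A - B)*(A + B) = 4*L" using A2 B2 by (simp add: power2_eq_square algebra_simps)
  have prod0: "(A0 - B0)*(A0 + B0) = 4*L" using A02 B02 by (simp add: power2_eq_square algebra_simps)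
  have step3: "A0 - B0 \<ge> A - B"
  proof -
    have "A0 \<le> A" unfolding A0_def A_def using Y1 by simp
    moreover have "B0 \<le> B" unfolding B0_def B_def using Y1 by simp
    ultimately have den: "A0 + B0 \<le> A + B" by simp
    show ?thesis
    proof (cases "L = 0")
      case True
      then show ?thesis unfolding A0_def B0_def A_def B_def by simp
    next
      case False
      hence Lp: "L > 0" using L0 by simp
      have "A0 > 0" unfolding A0_def using Y0 Lp by simp
      hence p0: "A0 + B0 > 0" using A00 by simp
      have e1: "A0 - B0 = 4*L/(A0+B0)" using prod0 p0 by (simp add: field_simps)
      have e2: "A - B = 4*L/(A+B)" using prodAB AB0 by (simp add: field_simps)
      show ?thesis unfolding e1 e2 using p0 den Lp by (intro divide_left_mono) auto
    qed
  qed
  have first: "S - 2*c + Y \<ge> (A - B)^2/4"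
  proof -
    have "(A - B)/2 \<le> D - R" using step2 step3 by simp
    hence "((A - B)/2)^2 \<le> (D - R)^2" using AB by (intro power_mono) auto
    thus ?thesis using step1 by (simp add: power_divide)
  qed
  have second: "(A - B)^2/4 \<ge> 3/4*L^2"
  proof -
    have "(A + B)^2 \<le> 16/3"
    proof -
      have "0 \<le> (A - 3*B)^2" by simp
      thus ?thesis using A2 B2 by (simp add: power2_eq_square algebra_simps)
    qed
    hence "(A+B)^2*(A-B)^2 \<le> 16/3*(A-B)^2"
      by (intro mult_right_mono) auto
    moreover have "(A+B)^2*(A-B)^2 = 16*L^2"
    proof -
      have "((A-B)*(A+B))^2 = (4*L)^2" using prodAB by simp
      thus ?thesis by (simp add: power_mult_distrib mult.commute)
    qed
    ultimately show ?thesis by simp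
  qed
  show ?thesis using first second unfolding Let_def L_def A_def B_def by simp
qed

lemma L2_prod:
  assumes f: "L2 M f" and g: "L2 M g"
  shows "integrable M (\<lambda>x. f x * g x)"
proof (rule Bochner_Integration.integrable_bound)
  show "integrable M (\<lambda>x. (f x)^2 + (g x)^2)" using f g unfolding L2_def by auto
  show "(\<lambda>x. f x * g x) \<in> borel_measurable M" using f g unfolding L2_def by auto
  show "AE x in M. norm (f x * g x) \<le> norm ((f x)^2 + (g x)^2)"
  proof (rule AE_I2)
    fix x
    have "\<bar>f x * g x\<bar> \<le> (f x)^2 + (g x)^2"
    proof -
      have "0 \<le> (\<bar>f x\<bar> - \<bar>g x\<bar>)^2" by simp
      hence "2*(\<bar>f x\<bar>*\<bar>g x\<bar>) \<le> \<bar>f x\<bar>^2 + \<bar>g x\<bar>^2" by (simp add: power2_eq_square algebra_simps)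
      moreover have "0 \<le> \<bar>f x\<bar>*\<bar>g x\<bar>" by simp
      ultimately show ?thesis unfolding abs_mult power2_abs by linarith
    qed
    thus "norm (f x * g x) \<le> norm ((f x)^2 + (g x)^2)" by simp
  qed
qed

lemma expand3:
  assumes f: "L2 M f" and g: "L2 M g" and h: "L2 M h"
  shows "(\<integral>x. (p*f x + q*g x + r*h x)^2 \<partial>M) =
    p^2*(\<integral>x. (f x)^2 \<partial>M) + q^2*(\<integral>x. (g x)^2 \<partial>M) + r^2*(\<integral>x. (h x)^2 \<partial>M)
    + 2*p*q*(\<integral>x. f x * g x \<partial>M) + 2*p*r*(\<integral>x. f x * h x \<partial>M) + 2*q*r*(\<integral>x. g x * h x \<partial>M)"
proof -
  have i: "integrable M (\<lambda>x. (f x)^2)" "integrable M (\<lambda>x. (g x)^2)" "integrable M (\<lambda>x. (h x)^2)"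
    using f g h unfolding L2_def by auto
  have j: "integrable M (\<lambda>x. f x * g x)" "integrable M (\<lambda>x. f x * h x)" "integrable M (\<lambda>x. g x * h x)"
    using L2_prod f g h by auto
  have eq: "(\<lambda>x. (p*f x + q*g x + r*h x)^2) = (\<lambda>x. p^2*(f x)^2 + q^2*(g x)^2 + r^2*(h x)^2
    + 2*p*q*(f x * g x) + 2*p*r*(f x * h x) + 2*q*r*(g x * h x))"
    by (auto simp: fun_eq_iff power2_eq_square algebra_simps)
  show ?thesis unfolding eq using i j by (simp add: integral_add integral_mult_right_zero)
qed

theorem theorem4p3:
  fixes M :: "'a measure" and fstar fteacher fstudent :: "'a \<Rightarrow> real"
  assumes "prob_space M"
    and "L2 M fstar" and "L2 M fteacher" and "L2 M fstudent"
    and "(\<integral>x. (fstar x)\<^sup>2 \<partial>M) \<le> 1"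
    and "shrinkage_optimal M fteacher fstar"
    and "shrinkage_optimal M fstudent fteacher"
  shows "let LTE = (\<integral>x. (fteacher x - fstar x)\<^sup>2 \<partial>M);
             LST = (\<integral>x. (fstudent x - fstar x)\<^sup>2 \<partial>M)
         in LST \<ge> (sqrt (1 + 3 * LTE) - sqrt (1 - LTE))\<^sup>2 / 4
            \<and> (sqrt (1 + 3 * LTE) - sqrt (1 - LTE))\<^sup>2 / 4 \<ge> 3 / 4 * LTE\<^sup>2"
  proof -
  define S where "S = (\<integral>x. (fstudent x)^2 \<partial>M)"
  define T where "T = (\<integral>x. (fteacher x)^2 \<partial>M)"
  define Y where "Y = (\<integral>x. (fstar x)^2 \<partial>M)"
  define a where "a = (\<integral>x. fteacher x * fstar x \<partial>M)"
  define b where "b = (\<integral>x. fstudent x * fteacher x \<partial>M)"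
  define c where "c = (\<integral>x. fstudent x * fstar x \<partial>M)"
  note E = expand3[OF assms(4,3,2), folded S_def T_def Y_def a_def b_def c_def]
  have P: "0 \<le> p^2*S + q^2*T + r^2*Y + 2*p*q*b + 2*p*r*c + 2*q*r*a" for p q r
  proof -
    have "0 \<le> (\<integral>x. (p*fstudent x + q*fteacher x + r*fstar x)^2 \<partial>M)"
      by (rule integral_nonneg_AE) auto
    thus ?thesis unfolding E .
  qed
  have G: "(\<integral>x. (p1*fstudent x + q1*fteacher x + r1*fstar x)^2 \<partial>M) = p1^2*S + q1^2*T + r1^2*Y + 2*p1*q1*b + 2*p1*r1*c + 2*q1*r1*a" for p1 q1 r1
    by (rule E)
  have tea: "(\<integral>x. (\<alpha> * fteacher x - fstar x)^2 \<partial>M) = \<alpha>^2*T - 2*\<alpha>*a + Y" for \<alpha>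
    using G[of 0 \<alpha> "-1"] by simp
  have stu: "(\<integral>x. (\<alpha> * fstudent x - fteacher x)^2 \<partial>M) = \<alpha>^2*S - 2*\<alpha>*b + T" for \<alpha>
    using G[of \<alpha> "-1" 0] by simp
  have LTE: "(\<integral>x. (fteacher x - fstar x)^2 \<partial>M) = T - 2*a + Y" using tea[of 1] by simp
  have LST: "(\<integral>x. (fstudent x - fstar x)^2 \<partial>M) = S - 2*c + Y" using G[of 1 0 "-1"] by simp
  have ST: "(\<integral>x. (fstudent x - fteacher x)^2 \<partial>M) = S - 2*b + T" using stu[of 1] by simp
  have H2: "T - 2*a + Y \<le> \<alpha>^2*T - 2*\<alpha>*a + Y" if "0 \<le> \<alpha>" "\<alpha> \<le> 1" for \<alpha>
    using assms(6) that unfolding shrinkage_optimal_def LTE[symmetric] tea[symmetric] by blast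
  have H3: "S - 2*b + T \<le> \<alpha>^2*S - 2*\<alpha>*b + T" if "0 \<le> \<alpha>" "\<alpha> \<le> 1" for \<alpha>
    using assms(7) that unfolding shrinkage_optimal_def ST[symmetric] stu[symmetric] by blast
  have Y1: "Y \<le> 1" using assms(5) unfolding Y_def .
  show ?thesis unfolding LTE LST by (rule main_real[OF Y1 H2 H3 P])
qed

end
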